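(* Let $\alpha\in(0,\pi)$ and let $G\subset\mathbb{R}^2$ be a domain (not necessarily contained in $S_\alpha$) such that for some $r>0$, \[ G\cap B^2(r)=S_\alpha\cap B^2(r). \] Then $A_G\ge A_{S_\alpha}$.
   Context: $S_\alpha=\{\rho e^{it}:\rho>0,\ t\in(0,\alpha)\}\subset\mathbb{R}^2=\mathbb{C}$, and $B^2(r)$ is the open disk of radius $r$ centered at the origin. For a domain $G\subsetneq\mathbb{R}^n$ let $d_G(x)=d(x,\partial G)$; $k_G(x,y)=\inf_\gamma\int_\gamma\frac{|dx|}{d_G(x)}$ over rectifiable curves $\gamma\subset G$ joining $x,y$ (quasihyperbolic distance); $j_G(x,y)=\log\left(1+\frac{|x-y|}{\min\{d_G(x),d_G(y)\}}\right)$; and $A_G=\inf\{A\ge1: k_G\le A\,j_G\text{ on }G\times G\}$ (with $\inf\emptyset=+\infty$). *)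

theory Defs
  imports "HOL-Analysis.Analysis"
begin

text \<open>The plane R^2 is identified with the complex numbers.\<close>

definition sector :: "real \<Rightarrow> complex set" where
  "sector \<alpha> = {z. \<exists>\<rho>>0. \<exists>t\<in>{0<..<\<alpha>}. z = complex_of_real \<rho> * cis t}"

definition dG :: "complex set \<Rightarrow> complex \<Rightarrow> real" where
  "dG G x = infdist x (frontier G)"

definition poly_sum :: "(real \<Rightarrow> complex) \<Rightarrow> real list \<Rightarrow> real" where
  "poly_sum g ts = (\<Sum>i<length ts - 1. dist (g (ts ! Suc i)) (g (ts ! i)))"

definition rectifiable_path :: "(real \<Rightarrow> complex) \<Rightarrow> bool" where
  "rectifiable_path g \<longleftrightarrow> path g \<and>
     bdd_above (poly_sum g ` {ts. sorted ts \<and> set ts \<subseteq> {0..1}})"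

definition arc_len :: "(real \<Rightarrow> complex) \<Rightarrow> real \<Rightarrow> real" where
  "arc_len g t = (SUP ts \<in> {ts. sorted ts \<and> set ts \<subseteq> {0..max 0 (min 1 t)}}. poly_sum g ts)"

definition qh_length :: "complex set \<Rightarrow> (real \<Rightarrow> complex) \<Rightarrow> ennreal" where
  "qh_length G g = (\<integral>\<^sup>+ t \<in> {0..1}. ennreal (1 / dG G (g t)) \<partial>(interval_measure (arc_len g)))"

definition qh_dist :: "complex set \<Rightarrow> complex \<Rightarrow> complex \<Rightarrow> ennreal" where
  "qh_dist G x y = Inf {qh_length G g | g. rectifiable_path g \<and> path_image g \<subseteq> G
                          \<and> pathstart g = x \<and> pathfinish g = y}"

definition j_dist :: "complex set \<Rightarrow> complex \<Rightarrow> complex \<Rightarrow> real" where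
  "j_dist G x y = ln (1 + dist x y / min (dG G x) (dG G y))"

definition A_const :: "complex set \<Rightarrow> ereal" where
  "A_const G = Inf (ereal ` {A. A \<ge> 1 \<and> (\<forall>x\<in>G. \<forall>y\<in>G. qh_dist G x y \<le> ennreal (A * j_dist G x y))})"

end

theory Submission
  imports Defs
begin


lemma ps_nil[simp]: "poly_sum g [] = 0" and ps_single[simp]: "poly_sum g [x] = 0"
  by (simp_all add: poly_sum_def)

lemma ps_cons2[simp]: "poly_sum g (x # y # ys) = dist (g y) (g x) + poly_sum g (y # ys)"
proof -
  have "poly_sum g (x # y # ys) = (\<Sum>i<Suc (length ys). dist (g ((x#y#ys) ! Suc i)) (g ((x#y#ys) ! i)))"
    by (simp add: poly_sum_def)
  also have "\<dots> = dist (g y) (g x) + (\<Sum>i<length ys. dist (g ((y#ys) ! Suc i)) (g ((y#ys) ! i)))"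
    by (subst sum.lessThan_Suc_shift) simp
  finally show ?thesis by (simp add: poly_sum_def)
qed

lemma ps_nonneg: "poly_sum g ts \<ge> 0"
  by (simp add: poly_sum_def sum_nonneg)

lemma ps_append: "poly_sum g (xs @ [s]) + poly_sum g (s # ys) = poly_sum g (xs @ s # ys)"
proof (induction xs)
  case Nil then show ?case by simp
next
  case (Cons x xs)
  then show ?case by (cases xs) (auto simp: algebra_simps)
qed

lemma ps_cons_le: "poly_sum g ts \<le> poly_sum g (a # ts)"
  by (cases ts) (auto simp: ps_nonneg)

lemma ps_snoc_le: "poly_sum g ts \<le> poly_sum g (ts @ [a])"
proof (cases ts rule: rev_cases)
  case Nil then show ?thesis by simp
next
  case (snoc xs x)
  have "poly_sum g (xs @ [x]) + poly_sum g [x, a] = poly_sum g (xs @ [x, a])"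
    using ps_append[of g xs x "[a]"] by simp
  then have "poly_sum g (xs @ [x]) + dist (g a) (g x) = poly_sum g (xs @ [x, a])" by simp
  then show ?thesis unfolding snoc using zero_le_dist[of "g a" "g x"] by (simp only: append_assoc append_Cons append_Nil)
qed

lemma ps_insert: "poly_sum g (xs @ ys) \<le> poly_sum g (xs @ a # ys)"
proof (cases "xs = []")
  case True then show ?thesis using ps_cons_le by simp
next
  case False
  then obtain xs' u where xs: "xs = xs' @ [u]" by (metis rev_exhaust)
  show ?thesis
  proof (cases ys)
    case Nil then show ?thesis using ps_snoc_le[of g xs a] by simp
  next
    case (Cons v ys')
    have e1: "poly_sum g (xs' @ [u]) + poly_sum g (u # v # ys') = poly_sum g (xs' @ u # v # ys')"
      by (rule ps_append)
    have e2: "poly_sum g (xs' @ [u]) + poly_sum g (u # a # v # ys') = poly_sum g (xs' @ u # a # v # ys')"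
      by (rule ps_append)
    have "dist (g v) (g u) \<le> dist (g a) (g u) + dist (g v) (g a)"
      by (metis dist_commute dist_triangle)
    then show ?thesis using e1 e2 xs Cons by simp
  qed
qed

lemma ps_shift: "poly_sum g (a # xs) \<le> dist (g a) (g s) + poly_sum g (s # xs)"
proof (cases xs)
  case Nil then show ?thesis by simp
next
  case (Cons v ys)
  have "dist (g v) (g a) \<le> dist (g v) (g s) + dist (g a) (g s)"
    by (metis dist_commute dist_triangle)
  then show ?thesis using Cons by simp
qed

definition LS :: "real \<Rightarrow> real \<Rightarrow> real list set" where
  "LS a b = {ts. sorted ts \<and> set ts \<subseteq> {a..b}}"

definition Var :: "(real \<Rightarrow> complex) \<Rightarrow> real \<Rightarrow> real \<Rightarrow> real" where
  "Var g a b = (SUP ts \<in> LS a b. poly_sum g ts)"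

lemma arc_len_Var: "arc_len g t = Var g 0 (max 0 (min 1 t))"
  by (simp add: arc_len_def Var_def LS_def)

lemma LS_mono: "c \<le> a \<Longrightarrow> b \<le> d \<Longrightarrow> LS a b \<subseteq> LS c d"
  by (auto simp: LS_def)

lemma Nil_LS[simp]: "[] \<in> LS a b" by (simp add: LS_def)

lemma rect_bdd: assumes "rectifiable_path g" "0 \<le> a" "b \<le> 1"
  shows "bdd_above (poly_sum g ` LS a b)"
proof -
  have "bdd_above (poly_sum g ` LS 0 1)" using assms(1)
    by (simp add: rectifiable_path_def LS_def)
  then show ?thesis by (rule bdd_above_mono) (use LS_mono[OF assms(2,3)] in auto)
qed

lemma Var_upper: assumes "rectifiable_path g" "0 \<le> a" "b \<le> 1" "ts \<in> LS a b"
  shows "poly_sum g ts \<le> Var g a b"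
  unfolding Var_def by (rule cSUP_upper[OF assms(4) rect_bdd[OF assms(1-3)]])

lemma Var_least: assumes "\<And>ts. ts \<in> LS a b \<Longrightarrow> poly_sum g ts \<le> M"
  shows "Var g a b \<le> M"
  unfolding Var_def apply (rule cSUP_least) using assms Nil_LS by blast+

lemma Var_nonneg: assumes "rectifiable_path g" "0 \<le> a" "b \<le> 1" shows "0 \<le> Var g a b"
  using Var_upper[OF assms Nil_LS] by simp

lemma Var_mono: assumes "rectifiable_path g" "0 \<le> c" "c \<le> a" "b \<le> d" "d \<le> 1"
  shows "Var g a b \<le> Var g c d"
  by (rule Var_least, rule Var_upper) (use assms LS_mono[of c a b d] in auto)

lemma sorted_dropWhile_gt: "sorted L \<Longrightarrow> x \<in> set (dropWhile (\<lambda>x. x \<le> a) L) \<Longrightarrow> a < x"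
proof (induction L)
  case Nil then show ?case by simp
next
  case (Cons y L)
  show ?case
  proof (cases "y \<le> a")
    case True then show ?thesis using Cons by simp
  next
    case False then show ?thesis using Cons by auto
  qed
qed

lemma Var_split: assumes "rectifiable_path g" "0 \<le> a" "a \<le> s" "s \<le> 1"
  shows "Var g 0 s \<le> Var g 0 a + Var g a s"
proof (rule Var_least)
  fix L assume L: "L \<in> LS 0 s"
  define L1 where "L1 = takeWhile (\<lambda>x. x \<le> a) L"
  define L2 where "L2 = dropWhile (\<lambda>x. x \<le> a) L"
  have LL: "L = L1 @ L2" by (simp add: L1_def L2_def)
  have sL: "sorted L" and setL: "set L \<subseteq> {0..s}" using L by (auto simp: LS_def)
  have s1: "sorted L1" "sorted L2" using sL LL sorted_append by metis+
  have g2: "\<forall>x\<in>set L2. a < x" using sorted_dropWhile_gt[OF sL] by (simp add: L2_def)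
  have g1: "\<forall>x\<in>set L1. x \<le> a" by (auto simp: L1_def dest: set_takeWhileD)
  have set1: "set L1 \<subseteq> {0..a}" using g1 setL LL by auto
  have "L1 @ [a] \<in> LS 0 a" unfolding LS_def using s1(1) g1 set1 assms(2) by (auto simp: sorted_append)
  then have u1: "poly_sum g (L1 @ [a]) \<le> Var g 0 a" using Var_upper[OF assms(1) order_refl] assms by simp
  have set2: "set L2 \<subseteq> {a..s}" using g2 setL LL by (auto simp: less_imp_le)
  have "a # L2 \<in> LS a s" unfolding LS_def using s1(2) g2 set2 assms(3) by (auto simp: less_imp_le)
  then have u2: "poly_sum g (a # L2) \<le> Var g a s" using Var_upper[OF assms(1)] assms by simp
  have i: "poly_sum g L \<le> poly_sum g (L1 @ a # L2)" using ps_insert[of g L1 L2 a] LL by simp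
  have e: "poly_sum g (L1 @ [a]) + poly_sum g (a # L2) = poly_sum g (L1 @ a # L2)" by (rule ps_append)
  show "poly_sum g L \<le> Var g 0 a + Var g a s" using u1 u2 i e by linarith
qed



lemma T2: fixes s::real assumes "sorted M" "set M \<subseteq> {a..s}" "sorted (s # L2)" "set L2 \<subseteq> {s..1}"
  shows "sorted (M @ s # L2)"
proof -
  have "\<forall>x\<in>set M. \<forall>y\<in>set (s # L2). x \<le> y"
  proof (intro ballI)
    fix x y assume "x \<in> set M" "y \<in> set (s # L2)"
    then have "x \<le> s" "s \<le> y" using assms by auto
    then show "x \<le> y" by linarith
  qed
  then show ?thesis using assms(1,3) by (simp add: sorted_append)
qed
lemma T3: fixes s::real assumes "sorted (M @ s # L2)" "set M \<subseteq> {a..s}" "a \<le> s" "set L2 \<subseteq> {s..1}"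
  shows "sorted (a # M @ s # L2)"
proof -
  have "\<forall>y\<in>set (M @ s # L2). a \<le> y"
  proof
    fix y assume "y \<in> set (M @ s # L2)"
    then have "y \<in> set M \<or> y = s \<or> y \<in> set L2" by auto
    then show "a \<le> y" using assms by auto
  qed
  then show ?thesis using assms(1) by simp
qed
lemma T4: fixes s::real assumes "sorted L1" "sorted (a # R)" "\<forall>x\<in>set L1. x = a"
  shows "sorted (L1 @ a # R)"
proof -
  have "\<forall>x\<in>set L1. \<forall>y\<in>set (a # R). x \<le> y" using assms(2,3) by auto
  then show ?thesis using assms(1,2) by (simp add: sorted_append)
qed


lemma Var_small:
  assumes g: "rectifiable_path g" and a: "0 \<le> a" "a < 1" and e: "e > 0"
  shows "\<exists>b>a. \<forall>s. a < s \<and> s < b \<longrightarrow> s < 1 \<and> Var g a s \<le> e"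
proof -
  define V where "V = Var g a 1"
  have "V - e/3 < V" using e by simp
  then have "V - e/3 < (SUP ts\<in>LS a 1. poly_sum g ts)" by (simp add: V_def Var_def)
  moreover have ne: "LS a 1 \<noteq> {}" using Nil_LS by blast
  ultimately have "\<exists>L\<in>LS a 1. V - e/3 < poly_sum g L"
    using less_cSUP_iff[OF ne rect_bdd[OF g a(1) order_refl], of "V - e/3"] by simp
  then obtain L where L: "L \<in> LS a 1" and pL: "V - e/3 < poly_sum g L" by blast
  have "continuous_on {0..1} g" using g by (simp add: rectifiable_path_def path_def)
  then have cg: "continuous (at a within {0..1}) g" using a
    by (simp add: continuous_on_eq_continuous_within)
  have e3: "e/3 > 0" using e by simp
  have "\<exists>d>0. \<forall>u\<in>{0..1}. dist u a < d \<longrightarrow> dist (g u) (g a) < e/3"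
    using cg e3 unfolding continuous_within_eps_delta by blast
  then obtain d where d: "d > 0" "\<And>u. u \<in> {0..1} \<Longrightarrow> dist u a < d \<Longrightarrow> dist (g u) (g a) < e/3"
    by blast
  define B where "B = insert (a + d) (insert 1 {x \<in> set L. a < x})"
  have fB: "finite B" by (simp add: B_def)
  have Bgt: "\<forall>x\<in>B. a < x" unfolding B_def using d(1) a(2) by simp
  define b where "b = Min B"
  have "B \<noteq> {}" unfolding B_def by simp
  then have "b \<in> B" unfolding b_def using fB by (intro Min_in)
  then have ab: "a < b" using Bgt by blast
  show ?thesis
  proof (intro exI[of _ b] conjI allI impI ab)
    fix s assume s: "a < s \<and> s < b"
    have sB: "s < x" if "x \<in> B" for x
    proof -
      have "b \<le> x" unfolding b_def using Min_le[OF fB that] .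
      then show ?thesis using s by linarith
    qed
    have s1: "s < 1" using sB[of 1] unfolding B_def by simp
    have sd: "s < a + d" using sB[of "a+d"] unfolding B_def by simp
    show "s < 1" by fact
    have sL: "s < x" if "x \<in> set L" "a < x" for x using sB[of x] that unfolding B_def by simp
    show "Var g a s \<le> e"
    proof (rule Var_least)
      fix M assume M: "M \<in> LS a s"
      define L1 where "L1 = takeWhile (\<lambda>x. x \<le> a) L"
      define L2 where "L2 = dropWhile (\<lambda>x. x \<le> a) L"
      have LL: "L = L1 @ L2" by (simp add: L1_def L2_def)
      have sortL: "sorted L" and setL: "set L \<subseteq> {a..1}" using L by (auto simp: LS_def)
      have so: "sorted L1" "sorted L2" using sortL LL sorted_append by metis+
      have g2: "\<forall>x\<in>set L2. s < x"
      proof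
        fix x assume x: "x \<in> set L2"
        have "a < x" using sorted_dropWhile_gt[OF sortL] x unfolding L2_def by blast
        moreover have "x \<in> set L" using x LL by (metis Un_iff set_append)
        ultimately show "s < x" using sL by blast
      qed
      have g1: "\<forall>x\<in>set L1. x = a"
      proof
        fix x assume x: "x \<in> set L1"
        then have "x \<le> a" unfolding L1_def by (rule set_takeWhileD[THEN conjunct2])
        moreover have "x \<in> set L" using x LL by (metis Un_iff set_append)
        then have "a \<le> x" using setL by auto
        ultimately show "x = a" by linarith
      qed
      have sM: "sorted M" "set M \<subseteq> {a..s}" using M by (auto simp: LS_def)
      have setL2: "set L2 \<subseteq> {s..1}"
      proof
        fix x assume x: "x \<in> set L2"
        then have "s < x" using g2 by blast
        moreover have "x \<in> set L" using x LL by (metis Un_iff set_append)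
        then have "x \<le> 1" using setL by auto
        ultimately show "x \<in> {s..1}" by simp
      qed
      have "\<forall>x\<in>set L2. s \<le> x" using g2 less_imp_le by blast
      then have t1: "sorted (s # L2)" using so(2) by simp
      have t2: "sorted (M @ s # L2)" by (rule T2[OF sM t1 setL2])
      have t3: "sorted (a # M @ s # L2)" by (rule T3[OF t2 sM(2) _ setL2]) (use s in linarith)
      have t4: "sorted (L1 @ a # M @ s # L2)" by (rule T4[OF so(1) t3 g1])
      have t5: "set (L1 @ a # M @ s # L2) \<subseteq> {a..1}"
      proof
        fix x assume "x \<in> set (L1 @ a # M @ s # L2)"
        then have "x \<in> set L1 \<or> x = a \<or> x \<in> set M \<or> x = s \<or> x \<in> set L2" by auto
        then show "x \<in> {a..1}" using g1 sM(2) setL2 s s1 a by auto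
      qed
      have "L1 @ a # M @ s # L2 \<in> LS a 1" using t4 t5 by (simp add: LS_def)
      then have big: "poly_sum g (L1 @ a # M @ s # L2) \<le> V"
        unfolding V_def using Var_upper[OF g a(1) order_refl] by blast
      have e1: "poly_sum g (L1 @ [a]) + poly_sum g (a # M @ s # L2) = poly_sum g (L1 @ a # M @ s # L2)"
        by (rule ps_append)
      have e2: "poly_sum g (a # M @ [s]) + poly_sum g (s # L2) = poly_sum g (a # M @ s # L2)"
        using ps_append[of g "a # M" s L2] by simp
      have e3: "poly_sum g (L1 @ [a]) + poly_sum g (a # L2) = poly_sum g (L1 @ a # L2)"
        by (rule ps_append)
      have i1: "poly_sum g L \<le> poly_sum g (L1 @ a # L2)" using ps_insert[of g L1 L2 a] LL by simp
      have i2: "poly_sum g (a # L2) \<le> dist (g a) (g s) + poly_sum g (s # L2)" by (rule ps_shift)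
      have "dist s a < d" using s sd by (simp add: dist_real_def)
      moreover have "s \<in> {0..1}" using s s1 a by simp
      ultimately have i3: "dist (g a) (g s) < e/3" using d(2)[of s] by (simp add: dist_commute)
      have i4: "poly_sum g M \<le> poly_sum g (a # M @ [s])"
        using ps_cons_le[of g M a] ps_snoc_le[of g "a # M" s] by simp
      show "poly_sum g M \<le> e" using e1 e2 e3 i1 i2 i3 i4 big pL e by linarith
    qed
  qed
qed

lemma arc_len_mono: assumes "rectifiable_path g" "t \<le> u" shows "arc_len g t \<le> arc_len g u"
  unfolding arc_len_Var by (rule Var_mono) (use assms in auto)

lemma arc_len_right_cont: assumes g: "rectifiable_path g" shows "continuous (at_right x) (arc_len g)"
proof -
  let ?F = "arc_len g"
  have "\<forall>\<^sub>F t in at_right x. dist (?F t) (?F x) < e" if e: "e > 0" for e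
  proof (cases "x < 0")
    case True
    have "\<forall>t. x < t \<and> t < 0 \<longrightarrow> ?F t = ?F x" using True by (simp add: arc_len_Var)
    then show ?thesis using True e unfolding eventually_at_right_field by (intro exI[of _ 0]) auto
  next
    case False
    show ?thesis
    proof (cases "x < 1")
      case False
      have "\<forall>t. x < t \<longrightarrow> ?F t = ?F x" using False by (simp add: arc_len_Var)
      then show ?thesis using e unfolding eventually_at_right_field by (intro exI[of _ "x+1"]) auto
    next
      case True
      have x0: "0 \<le> x" using \<open>\<not> x < 0\<close> by simp
      obtain b where b: "b > x" "\<And>s. x < s \<and> s < b \<Longrightarrow> s < 1 \<and> Var g x s \<le> e/2"
        using Var_small[OF g x0 True, of "e/2"] e by auto
      have "dist (?F t) (?F x) < e" if t: "x < t" "t < b" for t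
      proof -
        have t1: "t < 1" and vs: "Var g x t \<le> e/2" using b(2) t by auto
        have Ft: "?F t = Var g 0 t" and Fx: "?F x = Var g 0 x" using t t1 x0 by (auto simp: arc_len_Var)
        have "Var g 0 t \<le> Var g 0 x + Var g x t" by (rule Var_split) (use g x0 t t1 in auto)
        moreover have "Var g 0 x \<le> Var g 0 t" by (rule Var_mono) (use g x0 t t1 in auto)
        ultimately have "\<bar>?F t - ?F x\<bar> < e" using Ft Fx vs e by linarith
        then show ?thesis by (simp add: dist_real_def)
      qed
      then show ?thesis unfolding eventually_at_right_field using b(1) by blast
    qed
  qed
  then show ?thesis unfolding continuous_within tendsto_iff by blast
qed

lemma arc_len_dist: assumes g: "rectifiable_path g" "0 \<le> a" "a \<le> b" "b \<le> 1"
  shows "dist (g b) (g a) \<le> arc_len g b - arc_len g a"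
proof -
  have "Var g 0 a \<le> Var g 0 b - dist (g b) (g a)"
  proof (rule Var_least)
    fix L assume L: "L \<in> LS 0 a"
    then have "sorted L" "set L \<subseteq> {0..a}" by (auto simp: LS_def)
    then have "sorted (L @ [a, b])" "set (L @ [a, b]) \<subseteq> {0..b}" using assms unfolding sorted_append by auto
    then have "L @ [a, b] \<in> LS 0 b" by (simp add: LS_def)
    then have "poly_sum g (L @ [a, b]) \<le> Var g 0 b" using Var_upper assms by blast
    moreover have "poly_sum g (L @ [a]) + poly_sum g [a, b] = poly_sum g (L @ [a, b])"
      using ps_append[of g L a "[b]"] by simp
    moreover have "poly_sum g [a, b] = dist (g b) (g a)" by simp
    ultimately show "poly_sum g L \<le> Var g 0 b - dist (g b) (g a)"
      using ps_snoc_le[of g L a] by linarith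
  qed
  then show ?thesis using assms by (simp add: arc_len_Var)
qed



lemma emeasure_arc: assumes g: "rectifiable_path g" "a \<le> b"
  shows "emeasure (interval_measure (arc_len g)) {a<..b} = ennreal (arc_len g b - arc_len g a)"
  by (rule emeasure_interval_measure_Ioc) (use g arc_len_mono arc_len_right_cont in auto)

lemma ps_scale: assumes "c > 0"
  shows "poly_sum (\<lambda>s. complex_of_real c * g s) ts = c * poly_sum g ts"
proof -
  have "dist (complex_of_real c * x) (complex_of_real c * y) = c * dist x y" for x y
  proof -
    have "dist (complex_of_real c * x) (complex_of_real c * y) = norm (complex_of_real c * (x - y))"
      by (simp add: dist_norm algebra_simps)
    also have "\<dots> = c * dist x y" using assms by (simp add: norm_mult dist_norm)
    finally show ?thesis .
  qed
  then show ?thesis by (simp add: poly_sum_def sum_distrib_left)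
qed

lemma rect_scale: assumes g: "rectifiable_path g" and c: "c > 0"
  shows "rectifiable_path (\<lambda>s. complex_of_real c * g s)"
proof -
  have "path (\<lambda>s. complex_of_real c * g s)" using g unfolding rectifiable_path_def path_def
    by (intro continuous_intros) auto
  moreover obtain M where M: "\<And>ts. ts \<in> LS 0 1 \<Longrightarrow> poly_sum g ts \<le> M"
    using rect_bdd[OF g order_refl order_refl] unfolding bdd_above_def by blast
  then have "bdd_above (poly_sum (\<lambda>s. complex_of_real c * g s) ` LS 0 1)"
    unfolding bdd_above_def using c by (intro exI[of _ "c * M"]) (auto simp: ps_scale)
  ultimately show ?thesis by (simp add: rectifiable_path_def LS_def)
qed

lemma Var_scale: assumes g: "rectifiable_path g" and c: "c > 0" and ab: "0 \<le> a" "b \<le> 1"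
  shows "Var (\<lambda>s. complex_of_real c * g s) a b = c * Var g a b"
proof (rule antisym)
  show "Var (\<lambda>s. complex_of_real c * g s) a b \<le> c * Var g a b"
    by (rule Var_least) (use Var_upper[OF g ab] c in \<open>auto simp: ps_scale\<close>)
  have "Var g a b \<le> Var (\<lambda>s. complex_of_real c * g s) a b / c"
  proof (rule Var_least)
    fix ts assume "ts \<in> LS a b"
    then have "poly_sum (\<lambda>s. complex_of_real c * g s) ts \<le> Var (\<lambda>s. complex_of_real c * g s) a b"
      using Var_upper[OF rect_scale[OF g c] ab] by blast
    then show "poly_sum g ts \<le> Var (\<lambda>s. complex_of_real c * g s) a b / c"
      using c by (simp add: ps_scale field_simps)
  qed
  then show "c * Var g a b \<le> Var (\<lambda>s. complex_of_real c * g s) a b"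
    using c by (simp add: field_simps)
qed

lemma arc_len_scale: assumes g: "rectifiable_path g" and c: "c > 0"
  shows "arc_len (\<lambda>s. complex_of_real c * g s) = (\<lambda>t. c * arc_len g t)"
  by (rule ext) (simp add: arc_len_Var Var_scale[OF g c])

lemma interval_measure_scale:
  assumes mono: "\<And>x y. x \<le> y \<Longrightarrow> F x \<le> F y" and rc: "\<And>a. continuous (at_right a) F" and c: "c > 0"
  shows "interval_measure (\<lambda>x. c * F x) = scale_measure (ennreal c) (interval_measure F)"
proof (rule measure_eqI_generator_eq[where E="range (\<lambda>(a, b). {a<..b::real})" and \<Omega>=UNIV and A="\<lambda>i. {- real i<..real i}"])
  show "Int_stable (range (\<lambda>(a, b). {a<..b::real}))"
    unfolding Int_stable_def
  proof (safe)
    fix a b c d :: real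
    have "{a<..b} \<inter> {c<..d} = {max a c<..min b d}" by auto
    then show "{a<..b} \<inter> {c<..d} \<in> range (\<lambda>(a, b). {a<..b})" by auto
  qed
  show "range (\<lambda>(a, b). {a<..b::real}) \<subseteq> Pow UNIV" by simp
  have mc: "\<And>x y. x \<le> y \<Longrightarrow> c * F x \<le> c * F y" using mono c by (simp add: mult_left_mono)
  have rcc: "\<And>a. continuous (at_right a) (\<lambda>x. c * F x)" using rc by (intro continuous_intros)
  show "emeasure (interval_measure (\<lambda>x. c * F x)) X = emeasure (scale_measure (ennreal c) (interval_measure F)) X"
    if "X \<in> range (\<lambda>(a, b). {a<..b})" for X
  proof -
    from that obtain p where "X = (\<lambda>(a, b). {a<..b::real}) p" by blast
    then obtain a b where X: "X = {a<..b}" by (cases p) auto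
    show ?thesis
    proof (cases "a \<le> b")
      case True
      have "emeasure (interval_measure (\<lambda>x. c * F x)) X = ennreal (c * F b - c * F a)"
        unfolding X by (rule emeasure_interval_measure_Ioc[OF True mc rcc])
      moreover have "emeasure (interval_measure F) X = ennreal (F b - F a)"
        unfolding X by (rule emeasure_interval_measure_Ioc[OF True mono rc])
      moreover have "ennreal (c * F b - c * F a) = ennreal c * ennreal (F b - F a)"
        using c ennreal_mult'[of c "F b - F a"] by (simp add: right_diff_distrib)
      ultimately show ?thesis by simp
    next
      case False
      then show ?thesis using X by simp
    qed
  qed
  have sb: "sets (borel::real measure) = sigma_sets UNIV (range (\<lambda>(a,b). {a<..b::real}))"
    by (subst borel_sigma_sets_Ioc) (rule sets_measure_of, simp)
  show "sets (interval_measure (\<lambda>x. c * F x)) = sigma_sets UNIV (range (\<lambda>(a, b). {a<..b}))"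
    using sb by simp
  show "sets (scale_measure (ennreal c) (interval_measure F)) = sigma_sets UNIV (range (\<lambda>(a, b). {a<..b}))"
    using sb by simp
  show "range (\<lambda>i. {- real i<..real i}) \<subseteq> range (\<lambda>(a, b). {a<..b})" by auto
  show "(\<Union>i. {- real i<..real i}) = UNIV"
  proof (safe)
    fix x :: real
    obtain n :: nat where "\<bar>x\<bar> < n" using reals_Archimedean2 by blast
    then show "x \<in> (\<Union>i. {- real i<..real i})" by (intro UN_I[of n]) auto
  qed simp
  show "emeasure (interval_measure (\<lambda>x. c * F x)) {- real i<..real i} \<noteq> \<infinity>" for i
    by (subst emeasure_interval_measure_Ioc[OF _ mc rcc]) auto
qed



lemma dG_pos: assumes "open D" "frontier D \<noteq> {}" "z \<in> D" shows "dG D z > 0"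
proof -
  have "z \<notin> frontier D" using assms(1,3) by (simp add: frontier_def interior_open)
  then show ?thesis unfolding dG_def using infdist_pos_not_in_closed[OF frontier_closed assms(2)] by blast
qed

lemma meas_borel_interval: "f \<in> borel_measurable borel \<Longrightarrow> f \<in> borel_measurable (interval_measure F)"
  using measurable_cong_sets[OF sets_interval_measure[of F] refl] by simp

lemma integrand_meas:
  assumes p: "path g" "path_image g \<subseteq> D" and D: "open D" "frontier D \<noteq> {}"
  shows "(\<lambda>s. ennreal (1 / dG D (g s)) * indicator {0..1} s) \<in> borel_measurable borel"
proof -
  have pos: "dG D (g s) \<noteq> 0" if "s \<in> {0..1}" for s
  proof -
    have "g s \<in> D" using p(2) that by (auto simp: path_image_def)
    then show ?thesis using dG_pos[OF D] by fastforce
  qed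
  have cg: "continuous_on {0..1} g" using p by (simp add: path_def)
  have "continuous_on {0..1} (\<lambda>s. 1 / dG D (g s))"
    unfolding dG_def using pos unfolding dG_def
    by (intro continuous_intros cg) auto
  then have m: "(\<lambda>s. indicator {0..1} s *\<^sub>R (1 / dG D (g s))) \<in> borel_measurable borel"
    by (intro borel_measurable_continuous_on_indicator) auto
  have "(\<lambda>s. ennreal (indicator {0..1} s *\<^sub>R (1 / dG D (g s)))) \<in> borel_measurable borel"
    using measurable_compose[OF m measurable_ennreal] by (simp add: o_def)
  moreover have "(\<lambda>s. ennreal (indicator {0..1} s *\<^sub>R (1 / dG D (g s)))) =
      (\<lambda>s. ennreal (1 / dG D (g s)) * indicator {0..1} s)"
    by (rule ext) (simp split: split_indicator)
  ultimately show ?thesis by simp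
qed

lemma qh_scale:
  assumes g: "rectifiable_path g" and c: "c > 0"
    and meas: "(\<lambda>s. ennreal (1 / dG D (g s)) * indicator {0..1} s) \<in> borel_measurable borel"
    and sc: "\<And>s. s \<in> {0..1} \<Longrightarrow> dG D (complex_of_real c * g s) = c * dG D (g s)"
    and nn: "\<And>s. s \<in> {0..1} \<Longrightarrow> dG D (g s) \<ge> 0"
  shows "qh_length D (\<lambda>s. complex_of_real c * g s) = qh_length D g"
proof -
  let ?f = "\<lambda>s. ennreal (1 / dG D (g s)) * indicator {0..1} s"
  let ?\<mu> = "interval_measure (arc_len g)"
  have eq: "(\<lambda>s. ennreal (1 / dG D (complex_of_real c * g s)) * indicator {0..1} s) = (\<lambda>s. ennreal (1/c) * ?f s)"
  proof (rule ext)
    fix s show "ennreal (1 / dG D (complex_of_real c * g s)) * indicator {0..1} s = ennreal (1/c) * ?f s"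
    proof (cases "s \<in> {0..1}")
      case True
      have "1 / dG D (complex_of_real c * g s) = (1/c) * (1 / dG D (g s))" using sc[OF True] by simp
      moreover have "ennreal ((1/c) * (1 / dG D (g s))) = ennreal (1/c) * ennreal (1 / dG D (g s))"
        by (rule ennreal_mult) (use c nn[OF True] in auto)
      ultimately show ?thesis using True by simp
    qed simp
  qed
  have mu: "interval_measure (arc_len (\<lambda>s. complex_of_real c * g s)) = scale_measure (ennreal c) ?\<mu>"
    unfolding arc_len_scale[OF g c]
    by (rule interval_measure_scale) (use g arc_len_mono arc_len_right_cont c in auto)
  have m1: "?f \<in> borel_measurable ?\<mu>" by (rule meas_borel_interval[OF meas])
  then have m2: "(\<lambda>s. ennreal (1/c) * ?f s) \<in> borel_measurable ?\<mu>" by measurable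
  have "qh_length D (\<lambda>s. complex_of_real c * g s) = nn_integral (scale_measure (ennreal c) ?\<mu>) (\<lambda>s. ennreal (1/c) * ?f s)"
    unfolding qh_length_def mu eq by simp
  also have "\<dots> = ennreal c * (ennreal (1/c) * nn_integral ?\<mu> ?f)"
    by (simp add: nn_integral_scale_measure[OF m2] nn_integral_cmult[OF m1])
  also have "\<dots> = nn_integral ?\<mu> ?f"
    using c by (simp add: mult.assoc[symmetric] ennreal_mult[symmetric])
  also have "\<dots> = qh_length D g" unfolding qh_length_def by simp
  finally show ?thesis .
qed

section \<open>Geometry\<close>

lemma sector_scale: assumes "c > 0" "z \<in> sector \<alpha>" shows "complex_of_real c * z \<in> sector \<alpha>"
proof -
  obtain \<rho> t where "\<rho> > 0" "t \<in> {0<..<\<alpha>}" "z = complex_of_real \<rho> * cis t"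
    using assms(2) unfolding sector_def by blast
  then show ?thesis unfolding sector_def using assms(1)
    by (intro CollectI exI[of _ "c * \<rho>"] conjI bexI[of _ t]) (auto simp: algebra_simps)
qed

lemma zero_notin_sector: "0 \<notin> sector \<alpha>"
  unfolding sector_def by auto

lemma infdist_geI: assumes "A \<noteq> {}" "\<And>a. a \<in> A \<Longrightarrow> d \<le> dist x a" shows "d \<le> infdist x A"
  unfolding infdist_def using assms by (auto intro!: cINF_greatest)

lemma infdist_scale_le:
  fixes z :: complex
  assumes c: "c > 0" and F: "F \<noteq> {}" and cl: "\<And>a. a \<in> F \<Longrightarrow> complex_of_real c * a \<in> F"
  shows "infdist (complex_of_real c * z) F \<le> c * infdist z F"
proof -
  have "infdist (complex_of_real c * z) F / c \<le> infdist z F"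
  proof (rule infdist_geI[OF F])
    fix a assume a: "a \<in> F"
    have "infdist (complex_of_real c * z) F \<le> dist (complex_of_real c * z) (complex_of_real c * a)"
      by (rule infdist_le[OF cl[OF a]])
    also have "\<dots> = c * dist z a"
      using c by (simp add: dist_norm norm_mult right_diff_distrib[symmetric])
    finally show "infdist (complex_of_real c * z) F / c \<le> dist z a" using c by (simp add: field_simps)
  qed
  then show ?thesis using c by (simp add: field_simps)
qed

lemma infdist_scale:
  fixes z :: complex
  assumes c: "c > 0" and F: "F \<noteq> {}" and cl: "\<And>a c. c > 0 \<Longrightarrow> a \<in> F \<Longrightarrow> complex_of_real c * a \<in> F"
  shows "infdist (complex_of_real c * z) F = c * infdist z F"
proof (rule antisym)
  show "infdist (complex_of_real c * z) F \<le> c * infdist z F"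
    by (rule infdist_scale_le[OF c F]) (use cl c in auto)
  have "infdist (complex_of_real (1/c) * (complex_of_real c * z)) F \<le> (1/c) * infdist (complex_of_real c * z) F"
  proof (rule infdist_scale_le[OF _ F])
    show "0 < 1/c" using c by simp
    fix a assume "a \<in> F" then show "complex_of_real (1/c) * a \<in> F" by (rule cl[rotated]) (use c in simp)
  qed
  then have "infdist z F \<le> (1/c) * infdist (complex_of_real c * z) F"
    using c by (simp add: mult.assoc[symmetric] of_real_mult[symmetric])
  then show "c * infdist z F \<le> infdist (complex_of_real c * z) F"
    using c by (simp add: field_simps)
qed

lemma sector_image: assumes "c > 0" shows "(\<lambda>z. c *\<^sub>R z) ` sector \<alpha> = sector \<alpha>"
proof
  show "(\<lambda>z. c *\<^sub>R z) ` sector \<alpha> \<subseteq> sector \<alpha>"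
    using sector_scale[OF assms] by (auto simp: scaleR_conv_of_real)
  show "sector \<alpha> \<subseteq> (\<lambda>z. c *\<^sub>R z) ` sector \<alpha>"
  proof
    fix z assume z: "z \<in> sector \<alpha>"
    have "complex_of_real (1/c) * z \<in> sector \<alpha>" by (rule sector_scale) (use assms z in simp_all)
    moreover have "z = c *\<^sub>R (complex_of_real (1/c) * z)"
      using assms by (simp add: scaleR_conv_of_real mult.assoc[symmetric] of_real_mult[symmetric])
    ultimately show "z \<in> (\<lambda>z. c *\<^sub>R z) ` sector \<alpha>" by blast
  qed
qed

lemma frontier_sector_scale: assumes "c > 0" "a \<in> frontier (sector \<alpha>)"
  shows "complex_of_real c * a \<in> frontier (sector \<alpha>)"
proof -
  have lin: "linear (\<lambda>z::complex. c *\<^sub>R z)" by (rule linear_scaleR)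
  have inj: "inj (\<lambda>z::complex. c *\<^sub>R z)" using assms(1) by (auto intro: injI)
  have cl: "closure (sector \<alpha>) = (\<lambda>z. c *\<^sub>R z) ` closure (sector \<alpha>)"
    using closure_injective_linear_image[OF lin inj, of "sector \<alpha>"] sector_image[OF assms(1)] by simp
  have it: "interior (sector \<alpha>) = (\<lambda>z. c *\<^sub>R z) ` interior (sector \<alpha>)"
    using interior_injective_linear_image[OF lin inj, of "sector \<alpha>"] sector_image[OF assms(1)] by simp
  have "frontier (sector \<alpha>) = (\<lambda>z. c *\<^sub>R z) ` frontier (sector \<alpha>)"
    unfolding frontier_def using inj by (subst cl, subst it) (simp add: image_set_diff)
  then have "c *\<^sub>R a \<in> frontier (sector \<alpha>)" using assms(2) by (metis image_eqI)
  then show ?thesis by (simp add: scaleR_conv_of_real)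
qed



lemma zero_closure_sector: assumes "\<alpha> > 0" "r > 0" shows "0 \<in> closure (sector \<alpha> \<inter> ball 0 r)"
  unfolding closure_approachable
proof (intro allI impI)
  fix e :: real assume e: "e > 0"
  define m where "m = min (e/2) (r/2)"
  have m: "m > 0" "m < e" "m < r" using e assms by (auto simp: m_def)
  define y where "y = complex_of_real m * cis (\<alpha>/2)"
  have "y \<in> sector \<alpha>" unfolding sector_def y_def using m assms
    by (intro CollectI exI[of _ m] conjI bexI[of _ "\<alpha>/2"]) auto
  moreover have ny: "norm y = m" using m by (simp add: y_def norm_mult)
  ultimately show "\<exists>y\<in>sector \<alpha> \<inter> ball 0 r. dist y 0 < e" using m
    by (intro bexI[of _ y]) auto
qed

lemma frontier_ball_local: "frontier X \<inter> ball 0 r = (closure (X \<inter> ball 0 r) \<inter> ball 0 r) - interior (X \<inter> ball 0 r)"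
proof -
  have c: "closure X \<inter> ball 0 r = closure (X \<inter> ball 0 r) \<inter> ball 0 r"
  proof
    show "closure X \<inter> ball 0 r \<subseteq> closure (X \<inter> ball 0 r) \<inter> ball 0 r"
      using open_Int_closure_subset[OF open_ball, of 0 r X] by (auto simp: Int_commute)
    show "closure (X \<inter> ball 0 r) \<inter> ball 0 r \<subseteq> closure X \<inter> ball 0 r"
      using closure_mono[of "X \<inter> ball 0 r" X] by auto
  qed
  have i: "interior X \<inter> ball 0 r = interior (X \<inter> ball 0 r)"
    by (simp add: interior_Int interior_open)
  show ?thesis unfolding frontier_def using c i by blast
qed

lemma infdist_restrict:
  fixes z :: complex
  assumes "0 \<in> A" "norm z < r/2"
  shows "infdist z A = infdist z (A \<inter> ball 0 r)"
proof (rule antisym)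
  have r: "r > 0" using assms(2) norm_ge_zero[of z] by linarith
  show "infdist z A \<le> infdist z (A \<inter> ball 0 r)"
    by (rule infdist_mono) (use assms r in auto)
  show "infdist z (A \<inter> ball 0 r) \<le> infdist z A"
  proof (rule infdist_geI)
    show "A \<noteq> {}" using assms by auto
    fix a assume a: "a \<in> A"
    show "infdist z (A \<inter> ball 0 r) \<le> dist z a"
    proof (cases "a \<in> ball 0 r")
      case True then show ?thesis using a by (intro infdist_le) auto
    next
      case False
      then have "norm a \<ge> r" by (simp add: dist_norm)
      moreover have "norm a \<le> norm z + dist z a" using norm_triangle_ineq[of z "a - z"]
        by (simp add: dist_norm norm_minus_commute)
      ultimately have "norm z \<le> dist z a" using assms by linarith
      moreover have "infdist z (A \<inter> ball 0 r) \<le> dist z 0"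
        by (rule infdist_le) (use assms r in auto)
      ultimately show ?thesis by simp
    qed
  qed
qed

lemma infdist_local:
  fixes z :: complex
  assumes "0 \<in> A" "0 \<in> B" "A \<inter> ball 0 r = B \<inter> ball 0 r" "norm z < r/2"
  shows "infdist z A = infdist z B"
  using infdist_restrict[OF assms(1,4)] infdist_restrict[OF assms(2,4)] assms(3) by simp

lemma dG_le_norm: "0 \<in> frontier D \<Longrightarrow> dG D z \<le> norm z"
  unfolding dG_def using infdist_le[of 0 "frontier D" z] by simp

lemma exit_bound:
  assumes g: "rectifiable_path g" "path_image g \<subseteq> D" and D: "open D" "0 \<in> frontier D"
    and rho: "\<rho> > 0" "norm (g 0) = \<rho>" and s1: "s1 \<in> {0..1}" "norm (g s1) \<ge> 2^N * \<rho>"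
  shows "qh_length D g \<ge> ennreal (real N / 2)"
proof -
  let ?\<mu> = "interval_measure (arc_len g)"
  let ?f = "\<lambda>s. ennreal (1 / dG D (g s)) * indicator {0..1} s"
  have pg: "path g" using g(1) by (simp add: rectifiable_path_def)
  have cg: "continuous_on {0..1} g" using pg by (simp add: path_def)
  have fne: "frontier D \<noteq> {}" using D by auto
  have fm: "?f \<in> borel_measurable ?\<mu>"
    by (rule meas_borel_interval, rule integrand_meas[OF pg g(2) D(1) fne])
  define S where "S k = {s \<in> {0..1}. 2^k * \<rho> \<le> norm (g s)}" for k :: nat
  define T where "T k = Inf (S k)" for k
  have Sne: "S k \<noteq> {}" if "k \<le> N" for k
  proof -
    have "(2::real)^k \<le> 2^N" using that by (simp add: power_increasing)
    then have "2^k * \<rho> \<le> norm (g s1)" using s1 rho by (meson order.trans mult_right_mono less_imp_le)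
    then show ?thesis using s1 by (auto simp: S_def)
  qed
  have Sbdd: "bdd_below (S k)" for k by (rule bdd_belowI[of _ 0]) (auto simp: S_def)
  have Scl: "closed (S k)" for k
    unfolding S_def by (rule continuous_on_closed_Collect_le) (rule continuous_on_const, rule continuous_on_norm[OF cg], simp)
  have TS: "T k \<in> S k" if "k \<le> N" for k
    unfolding T_def by (rule closed_contains_Inf[OF Sne[OF that] Sbdd Scl])
  have T01: "T k \<in> {0..1}" and Tge: "2^k * \<rho> \<le> norm (g (T k))" if "k \<le> N" for k
    using TS[OF that] by (auto simp: S_def)
  have below: "norm (g s) < 2^k * \<rho>" if "s \<in> {0..1}" "s < T k" for s k
  proof (rule ccontr)
    assume "\<not> ?thesis"
    then have "s \<in> S k" using that by (auto simp: S_def)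
    then have "T k \<le> s" unfolding T_def by (rule cInf_lower[OF _ Sbdd])
    then show False using that by simp
  qed
  have Tmono: "T j \<le> T k" if "j \<le> k" "k \<le> N" for j k
  proof -
    have "S k \<subseteq> S j"
    proof
      fix s assume "s \<in> S k"
      moreover have "(2::real)^j \<le> 2^k" using that by (simp add: power_increasing)
      then have "2^j * \<rho> \<le> 2^k * \<rho>" using rho by (intro mult_right_mono) auto
      ultimately show "s \<in> S j" unfolding S_def by auto
    qed
    then show ?thesis unfolding T_def using cInf_superset_mono[OF Sne[OF that(2)] Sbdd] by blast
  qed
  have upto: "norm (g s) \<le> 2^k * \<rho>" if "k \<le> N" "s \<in> {0..T k}" for s k
  proof (cases "T k = 0")
    case True
    then have "s = 0" using that by simp
    then show ?thesis using rho by simp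
  next
    case False
    then have Tp: "0 < T k" using T01[OF that(1)] by simp
    have C: "closed {s \<in> {0..1}. norm (g s) \<le> 2^k * \<rho>}"
      by (rule continuous_on_closed_Collect_le) (rule continuous_on_norm[OF cg], rule continuous_on_const, simp)
    have "{0..<T k} \<subseteq> {s \<in> {0..1}. norm (g s) \<le> 2^k * \<rho>}"
      using below T01[OF that(1)] by (auto intro: less_imp_le)
    then have "closure {0..<T k} \<subseteq> {s \<in> {0..1}. norm (g s) \<le> 2^k * \<rho>}"
      using C by (rule closure_minimal)
    then show ?thesis using that Tp by auto
  qed
  have piece: "ennreal (1/2) \<le> \<integral>\<^sup>+ s. ?f s * indicator {T k<..T (Suc k)} s \<partial>?\<mu>" if k: "k < N" for k
  proof -
    let ?a = "T k" and ?b = "T (Suc k)"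
    define c where "c = 1 / (2^Suc k * \<rho>)"
    have c0: "c > 0" using rho by (simp add: c_def)
    have ab: "?a \<le> ?b" using Tmono[of k "Suc k"] k by simp
    have a01: "?a \<in> {0..1}" and b01: "?b \<in> {0..1}" using T01 k by auto
    have "ennreal c * indicator {?a<..?b} s \<le> ?f s * indicator {?a<..?b} s" for s
    proof (cases "s \<in> {?a<..?b}")
      case True
      then have s01: "s \<in> {0..1}" using a01 b01 by auto
      have gsD: "g s \<in> D" using g(2) s01 by (auto simp: path_image_def)
      have "norm (g s) \<le> 2^Suc k * \<rho>" using upto[of "Suc k" s] True k a01 by auto
      moreover have "0 < dG D (g s)" by (rule dG_pos[OF D(1) fne gsD])
      moreover have "dG D (g s) \<le> norm (g s)" by (rule dG_le_norm[OF D(2)])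
      ultimately have "c \<le> 1 / dG D (g s)" unfolding c_def using rho
        by (intro divide_left_mono) (auto intro: order_trans)
      then show ?thesis using True s01 by (simp add: ennreal_leI)
    qed simp
    then have A: "\<integral>\<^sup>+ s. ennreal c * indicator {?a<..?b} s \<partial>?\<mu> \<le> \<integral>\<^sup>+ s. ?f s * indicator {?a<..?b} s \<partial>?\<mu>"
      by (intro nn_integral_mono) auto
    have B: "\<integral>\<^sup>+ s. ennreal c * indicator {?a<..?b} s \<partial>?\<mu> = ennreal c * emeasure ?\<mu> {?a<..?b}"
      by (rule nn_integral_cmult_indicator) simp
    have C: "emeasure ?\<mu> {?a<..?b} = ennreal (arc_len g ?b - arc_len g ?a)"
      by (rule emeasure_arc[OF g(1) ab])
    have E: "2^k * \<rho> \<le> arc_len g ?b - arc_len g ?a"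
    proof -
      have "dist (g ?b) (g ?a) \<le> arc_len g ?b - arc_len g ?a"
        by (rule arc_len_dist[OF g(1)]) (use a01 b01 ab in auto)
      moreover have "norm (g ?b) - norm (g ?a) \<le> dist (g ?b) (g ?a)"
        using norm_triangle_ineq2[of "g ?b" "g ?a"] by (simp add: dist_norm)
      moreover have "2^Suc k * \<rho> \<le> norm (g ?b)" using Tge[of "Suc k"] k by simp
      moreover have "norm (g ?a) \<le> 2^k * \<rho>" using upto[of k ?a] k a01 by auto
      ultimately show ?thesis by simp
    qed
    have D: "ennreal (1/2) \<le> ennreal c * ennreal (arc_len g ?b - arc_len g ?a)"
    proof -
      have "1/2 \<le> c * (arc_len g ?b - arc_len g ?a)"
      proof -
        have "c * (2^k * \<rho>) = 1/2" using rho by (simp add: c_def)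
        moreover have "c * (2^k * \<rho>) \<le> c * (arc_len g ?b - arc_len g ?a)"
          by (rule mult_left_mono[OF E]) (use c0 in simp)
        ultimately show ?thesis by linarith
      qed
      then have "ennreal (1/2) \<le> ennreal (c * (arc_len g ?b - arc_len g ?a))" by (rule ennreal_leI)
      also have "\<dots> = ennreal c * ennreal (arc_len g ?b - arc_len g ?a)"
        by (rule ennreal_mult) (use c0 arc_len_mono[OF g(1) ab] in auto)
      finally show ?thesis .
    qed
    have "ennreal (1/2) \<le> \<integral>\<^sup>+ s. ennreal c * indicator {?a<..?b} s \<partial>?\<mu>"
      using D unfolding B C .
    then show ?thesis using A by (rule order.trans)
  qed
  have mi: "(\<lambda>s. ?f s * indicator {u<..v} s) \<in> borel_measurable ?\<mu>" for u v :: real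
    by (intro borel_measurable_times_ennreal fm borel_measurable_indicator) simp
  have sum: "ennreal (real n / 2) \<le> \<integral>\<^sup>+ s. ?f s * indicator {T 0<..T n} s \<partial>?\<mu>" if "n \<le> N" for n
    using that
  proof (induction n)
    case 0 then show ?case by simp
  next
    case (Suc n)
    have IH: "ennreal (real n / 2) \<le> \<integral>\<^sup>+ s. ?f s * indicator {T 0<..T n} s \<partial>?\<mu>" using Suc by simp
    have m1: "T 0 \<le> T n" "T n \<le> T (Suc n)" using Tmono Suc.prems by auto
    have ind: "(indicator {T 0<..T (Suc n)} s :: ennreal) = indicator {T 0<..T n} s + indicator {T n<..T (Suc n)} s" for s
      using m1 by (auto simp: indicator_def)
    have split: "?f s * indicator {T 0<..T (Suc n)} s = ?f s * indicator {T 0<..T n} s + ?f s * indicator {T n<..T (Suc n)} s" for s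
      unfolding ind by (simp add: distrib_left)
    have eq: "\<integral>\<^sup>+ s. ?f s * indicator {T 0<..T (Suc n)} s \<partial>?\<mu> =
        (\<integral>\<^sup>+ s. ?f s * indicator {T 0<..T n} s \<partial>?\<mu>) + (\<integral>\<^sup>+ s. ?f s * indicator {T n<..T (Suc n)} s \<partial>?\<mu>)"
      unfolding split by (rule nn_integral_add[OF mi mi])
    have P: "ennreal (1/2) \<le> \<integral>\<^sup>+ s. ?f s * indicator {T n<..T (Suc n)} s \<partial>?\<mu>"
      using piece Suc.prems by simp
    have H: "ennreal (real (Suc n) / 2) = ennreal (real n / 2) + ennreal (1/2)"
      by (simp add: ennreal_plus[symmetric] add_divide_distrib)
    have "ennreal (real n / 2) + ennreal (1/2) \<le> (\<integral>\<^sup>+ s. ?f s * indicator {T 0<..T n} s \<partial>?\<mu>) + (\<integral>\<^sup>+ s. ?f s * indicator {T n<..T (Suc n)} s \<partial>?\<mu>)"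
      by (rule add_mono[OF IH P])
    then show ?case unfolding H eq .
  qed
  have "\<integral>\<^sup>+ s. ?f s * indicator {T 0<..T N} s \<partial>?\<mu> \<le> \<integral>\<^sup>+ s. ?f s \<partial>?\<mu>"
    by (intro nn_integral_mono) (simp add: indicator_def)
  then show ?thesis using sum[of N] unfolding qh_length_def by (meson order.trans order_refl)
qed



lemma j_nonneg: "0 \<le> j_dist D x y"
  unfolding j_dist_def dG_def by (simp add: infdist_nonneg)

lemma key:
  fixes \<alpha> r A :: real and G :: "complex set"
  assumes a: "0 < \<alpha>" and G: "open G" and r: "r > 0"
    and loc: "G \<inter> ball 0 r = sector \<alpha> \<inter> ball 0 r"
    and HA: "\<forall>x\<in>G. \<forall>y\<in>G. qh_dist G x y \<le> ennreal (A * j_dist G x y)" and A1: "A \<ge> 1"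
    and x: "x \<in> sector \<alpha>" and y: "y \<in> sector \<alpha>"
  shows "qh_dist (sector \<alpha>) x y \<le> ennreal (A * j_dist (sector \<alpha>) x y)"
proof (rule ccontr)
  define S where "S = sector \<alpha>"
  define J where "J = A * j_dist S x y"
  have J0: "J \<ge> 0" unfolding J_def using A1 j_nonneg by simp
  assume "\<not> ?thesis"
  then have "ennreal J < qh_dist S x y" unfolding J_def S_def by simp
  then obtain z where z: "ennreal J < z" "z < qh_dist S x y" using dense by blast
  have "z < top" using z(2) by (rule order.strict_trans2) simp
  then have "z \<noteq> \<infinity>" by simp
  then obtain M where M: "z = ennreal M" "M \<ge> 0" by (cases z) auto
  have JM: "J < M" using z(1) M J0 ennreal_less_iff by simp
  have MS: "ennreal M < qh_dist S x y" using z M by simp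
  have cS: "0 \<in> closure (S \<inter> ball 0 r)" unfolding S_def by (rule zero_closure_sector[OF a r])
  have fS: "0 \<in> frontier S"
  proof -
    have "0 \<in> closure S" using cS closure_mono[of "S \<inter> ball 0 r" S] by auto
    moreover have "0 \<notin> interior S" using interior_subset[of S] zero_notin_sector unfolding S_def by blast
    ultimately show ?thesis by (simp add: frontier_def)
  qed
  have locS: "G \<inter> ball 0 r = S \<inter> ball 0 r" using loc unfolding S_def .
  have fG: "0 \<in> frontier G"
  proof -
    have "closure (G \<inter> ball 0 r) \<subseteq> closure G" by (rule closure_mono) blast
    then have "0 \<in> closure G" using cS unfolding locS by blast
    moreover have "0 \<notin> G"
    proof
      assume "0 \<in> G"
      moreover have "(0::complex) \<in> ball 0 r" using r by simp
      ultimately have "(0::complex) \<in> S \<inter> ball 0 r" using locS by blast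
      then show False using zero_notin_sector unfolding S_def by blast
    qed
    ultimately show ?thesis using G by (simp add: frontier_def interior_open)
  qed
  have floc: "frontier G \<inter> ball 0 r = frontier S \<inter> ball 0 r"
    by (subst (1 2) frontier_ball_local) (simp only: locS)
  have dGS: "dG G z = dG S z" if "norm z < r/2" for z
    unfolding dG_def by (rule infdist_local[OF fG fS floc that])
  have fSne: "frontier S \<noteq> {}" using fS by blast
  have fScl: "\<And>a c. c > 0 \<Longrightarrow> a \<in> frontier S \<Longrightarrow> complex_of_real c * a \<in> frontier S"
    unfolding S_def by (rule frontier_sector_scale)
  have dSsc: "dG S (complex_of_real c * z) = c * dG S z" if "c > 0" for c z
    unfolding dG_def by (rule infdist_scale[OF that fSne fScl])
  have x0: "x \<noteq> 0" and y0: "y \<noteq> 0" using x y zero_notin_sector by auto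
  define N where "N = nat \<lceil>2 * M\<rceil>"
  have NM: "M \<le> real N / 2" unfolding N_def by linarith
  define t where "t = r / (2^(N+1) * (norm x + norm y))"
  have nxy: "norm x + norm y > 0" using x0 norm_ge_zero[of y] zero_less_norm_iff[of x] by linarith
  have t0: "t > 0" unfolding t_def using r nxy by simp
  have tn: "t * (norm x + norm y) = r / 2^(N+1)" unfolding t_def using nxy by simp
  have p2: "(2::real)^(N+1) \<ge> 2" by (metis Suc_eq_plus1 le_add2 power_increasing power_one_right one_le_numeral)
  have "r / 2^(N+1) \<le> r / 2" using r p2 by (intro divide_left_mono) auto
  moreover have "t * norm x < t * (norm x + norm y)" "t * norm y < t * (norm x + norm y)"
    using t0 x0 y0 by simp_all
  ultimately have small: "t * norm x < r/2" "t * norm y < r/2" using tn by linarith+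
  have bigN: "2^N * (t * norm x) \<le> r/2"
  proof -
    have "t * norm x \<le> t * (norm x + norm y)" using t0 by (intro mult_left_mono) auto
    then have "t * norm x \<le> r / 2^(N+1)" using tn by linarith
    then have "2^N * (t * norm x) \<le> 2^N * (r / 2^(N+1))"
      by (intro mult_left_mono) auto
    also have "\<dots> = r/2" by simp
    finally show ?thesis .
  qed
  define tx where "tx = complex_of_real t * x"
  define ty where "ty = complex_of_real t * y"
  have ntx: "norm tx = t * norm x" unfolding tx_def using t0 by (simp add: norm_mult)
  have nty: "norm ty = t * norm y" unfolding ty_def using t0 by (simp add: norm_mult)
  have txS: "tx \<in> S" "ty \<in> S" unfolding tx_def ty_def S_def
    by (rule sector_scale[OF t0 x], rule sector_scale[OF t0 y])
  have "tx \<in> ball 0 r" "ty \<in> ball 0 r" using small ntx nty r by auto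
  then have txG: "tx \<in> G" "ty \<in> G" using txS locS by blast+
  have jeq: "j_dist G tx ty = j_dist S x y"
  proof -
    have d1: "dG G tx = t * dG S x" using dGS[of tx] small(1) ntx dSsc[OF t0, of x] by (simp add: tx_def)
    have d2: "dG G ty = t * dG S y" using dGS[of ty] small(2) nty dSsc[OF t0, of y] by (simp add: ty_def)
    have d3: "dist tx ty = t * dist x y"
    proof -
      have "tx - ty = complex_of_real t * (x - y)" by (simp add: tx_def ty_def right_diff_distrib)
      then show ?thesis using t0 by (simp add: dist_norm norm_mult)
    qed
    have m: "min (t * dG S x) (t * dG S y) = t * min (dG S x) (dG S y)"
      using t0 by (simp add: min_def)
    have q: "(t * dist x y) / (t * min (dG S x) (dG S y)) = dist x y / min (dG S x) (dG S y)"
      using t0 by simp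
    show ?thesis unfolding j_dist_def d1 d2 d3 m q ..
  qed
  have "qh_dist G tx ty \<le> ennreal J" using HA[rule_format, OF txG] jeq unfolding J_def by simp
  also have "\<dots> < ennreal M" using JM J0 by (simp add: ennreal_lessI)
  finally have "qh_dist G tx ty < ennreal M" .
  then obtain g where g: "rectifiable_path g" "path_image g \<subseteq> G" "pathstart g = tx" "pathfinish g = ty"
      and gM: "qh_length G g < ennreal M"
    unfolding qh_dist_def Inf_less_iff by blast
  have pg: "path g" using g(1) by (simp add: rectifiable_path_def)
  show False
  proof (cases "\<forall>s\<in>{0..1}. norm (g s) < r/2")
    case True
    define c where "c = 1/t"
    have c0: "c > 0" using t0 by (simp add: c_def)
    define h where "h = (\<lambda>s. complex_of_real c * g s)"
    have gSs: "g s \<in> S" if "s \<in> {0..1}" for s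
    proof -
      have "g s \<in> G" using g(2) that by (auto simp: path_image_def)
      moreover have "norm (g s) < r/2" using True that by blast
      then have "g s \<in> ball 0 r" using r by simp
      ultimately show ?thesis using locS by blast
    qed
    have hr: "rectifiable_path h" unfolding h_def by (rule rect_scale[OF g(1) c0])
    have hS: "path_image h \<subseteq> S"
    proof
      fix w assume "w \<in> path_image h"
      then obtain s where s: "s \<in> {0..1}" "w = h s" by (auto simp: path_image_def)
      show "w \<in> S" unfolding s(2) h_def S_def by (rule sector_scale[OF c0 gSs[OF s(1), unfolded S_def]])
    qed
    have g0: "g 0 = tx" "g 1 = ty" using g(3,4) by (simp_all add: pathstart_def pathfinish_def)
    have ct: "complex_of_real c * complex_of_real t = 1" using t0 unfolding c_def
      by (simp add: of_real_mult[symmetric])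
    have hs: "pathstart h = x" "pathfinish h = y"
      unfolding pathstart_def pathfinish_def h_def g0 tx_def ty_def
      by (simp_all add: mult.assoc[symmetric] ct)
    have mem: "qh_length S h \<in> {qh_length S g | g. rectifiable_path g \<and> path_image g \<subseteq> S
                          \<and> pathstart g = x \<and> pathfinish g = y}"
      using hr hS hs by blast
    have "qh_dist S x y \<le> qh_length S h"
      unfolding qh_dist_def by (rule Inf_lower[OF mem])
    have feq: "(\<lambda>s. ennreal (1 / dG S (g s)) * indicator {0..1} s) = (\<lambda>s. ennreal (1 / dG G (g s)) * indicator {0..1} s)"
    proof (rule ext)
      fix s show "ennreal (1 / dG S (g s)) * indicator {0..1} s = ennreal (1 / dG G (g s)) * indicator {0..1} s"
      proof (cases "s \<in> {0..1}")
        case True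
        then have "norm (g s) < r/2" using \<open>\<forall>s\<in>{0..1}. norm (g s) < r/2\<close> by blast
        then show ?thesis using dGS[of "g s"] by simp
      qed simp
    qed
    moreover have "qh_length S h = qh_length S g"
      unfolding h_def
    proof (rule qh_scale[OF g(1) c0])
      have "(\<lambda>s. ennreal (1 / dG G (g s)) * indicator {0..1} s) \<in> borel_measurable borel"
        by (rule integrand_meas[OF pg g(2) G]) (use fG in auto)
      then show "(\<lambda>s. ennreal (1 / dG S (g s)) * indicator {0..1} s) \<in> borel_measurable borel"
        unfolding feq .
      show "dG S (complex_of_real c * g s) = c * dG S (g s)" for s by (rule dSsc[OF c0])
      show "0 \<le> dG S (g s)" for s by (simp add: dG_def infdist_nonneg)
    qed
    moreover have "qh_length S g = qh_length G g"
      unfolding qh_length_def feq ..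
    ultimately have "qh_dist S x y \<le> qh_length G g" using \<open>qh_dist S x y \<le> qh_length S h\<close> by simp
    then have "qh_dist S x y < ennreal M" using gM by (rule order.strict_trans1)
    then show False using MS by simp
  next
    case False
    then obtain s1 where s1: "s1 \<in> {0..1}" "norm (g s1) \<ge> r/2" by auto
    have g0: "norm (g 0) = t * norm x" using g(3) ntx by (simp add: pathstart_def)
    have "ennreal (real N / 2) \<le> qh_length G g"
      by (rule exit_bound[OF g(1,2) G fG _ g0 s1(1)]) (use t0 x0 s1(2) bigN in auto)
    moreover have "ennreal M \<le> ennreal (real N / 2)" using NM by (rule ennreal_leI)
    ultimately have "ennreal M \<le> qh_length G g" by (rule order.trans[rotated])
    then show False using gM by simp
  qed
qed

theorem mainTheorem15:
  fixes \<alpha> r :: real and G :: "complex set"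
  assumes "0 < \<alpha>" "\<alpha> < pi"
    and "open G" "connected G" "G \<noteq> {}" "G \<noteq> UNIV"
    and "r > 0"
    and "G \<inter> ball 0 r = sector \<alpha> \<inter> ball 0 r"
  shows "A_const G \<ge> A_const (sector \<alpha>)"
proof -
  let ?SG = "{A. A \<ge> 1 \<and> (\<forall>x\<in>G. \<forall>y\<in>G. qh_dist G x y \<le> ennreal (A * j_dist G x y))}"
  let ?SS = "{A. A \<ge> 1 \<and> (\<forall>x\<in>sector \<alpha>. \<forall>y\<in>sector \<alpha>. qh_dist (sector \<alpha>) x y \<le> ennreal (A * j_dist (sector \<alpha>) x y))}"
  have "?SG \<subseteq> ?SS"
  proof
    fix A assume "A \<in> ?SG"
    then have A1: "A \<ge> 1" and HA: "\<forall>x\<in>G. \<forall>y\<in>G. qh_dist G x y \<le> ennreal (A * j_dist G x y)" by auto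
    have "\<forall>x\<in>sector \<alpha>. \<forall>y\<in>sector \<alpha>. qh_dist (sector \<alpha>) x y \<le> ennreal (A * j_dist (sector \<alpha>) x y)"
      using key[OF assms(1) assms(3) assms(7) assms(8) HA A1] by blast
    then show "A \<in> ?SS" using A1 by blast
  qed
  then have "ereal ` ?SG \<subseteq> ereal ` ?SS" by (rule image_mono)
  then show ?thesis unfolding A_const_def by (rule Inf_superset_mono)
qed


end
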